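(* Let $K \ge 1$ be an integer, let $x$ be a sample point, and let $\hat{\pi}(x) = (\hat{\pi}_1(x), \dots, \hat{\pi}_K(x))$ be a probability vector on the classes $[K] = \{1,\dots,K\}$. Let $\hat{\pi}_{(1)}(x) \ge \hat{\pi}_{(2)}(x) \ge \cdots \ge \hat{\pi}_{(K)}(x)$ be its entries sorted in decreasing order, and for $i \in [K]$ let $V(\hat{\pi}(x), i) = \sum_{j=1}^{i} \hat{\pi}_{(j)}(x)$. Define the average non-conformity score $$\bar{V}(\hat{\pi}(x)) = \frac{1}{K}\sum_{i=1}^K V(\hat{\pi}(x), i)$$ and the entropy $H(\hat{\pi}(x)) = -\sum_{k=1}^K \hat{\pi}_k(x)\log \hat{\pi}_k(x)$ (with $0\log 0 = 0$). Then $$\bar{V}(\hat{\pi}(x)) \le \min\big(C_K + 1 - H(\hat{\pi}(x)),\; 1 + H(\hat{\pi}(x))\big),$$ where $C_K = \log\Big(\sum_{k=1}^K \exp\big(-\tfrac{k-1}{K}\big)\Big)$.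
   Context: $V(\hat{\pi}(x), i)$ is the Adaptive Prediction Sets (APS) non-conformity score associated with the $i$-th ranked class: the cumulative sum of the sorted predicted probabilities from the most likely class down to the class of rank $i$. *)

theory Defs
  imports Complex_Main
begin

text \<open>A probability vector on classes 1..K is modelled as p :: nat => real,
  only its values on {1..K} matter.\<close>

definition sorted_desc :: "nat \<Rightarrow> (nat \<Rightarrow> real) \<Rightarrow> real list" where
  "sorted_desc K p = rev (sort (map p [1..<K+1]))"

definition aps_score :: "nat \<Rightarrow> (nat \<Rightarrow> real) \<Rightarrow> nat \<Rightarrow> real" where
  "aps_score K p i = sum_list (take i (sorted_desc K p))"

definition avg_score :: "nat \<Rightarrow> (nat \<Rightarrow> real) \<Rightarrow> real" where
  "avg_score K p = (1 / real K) * (\<Sum>i=1..K. aps_score K p i)"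

definition entropy :: "nat \<Rightarrow> (nat \<Rightarrow> real) \<Rightarrow> real" where
  "entropy K p = - (\<Sum>k=1..K. (if p k = 0 then 0 else p k * ln (p k)))"

definition C_const :: "nat \<Rightarrow> real" where
  "C_const K = ln (\<Sum>k=1..K. exp (- (real k - 1) / real K))"

end

theory Submission
  imports Defs "HOL-Library.Multiset"
begin

lemma double_sum:
  fixes q :: "nat \<Rightarrow> real"
  shows "(\<Sum>i=1..n. \<Sum>j<i. q j) = (\<Sum>j<n. (real n - real j) * q j)"
proof (induction n)
  case 0 then show ?case by simp
next
  case (Suc n)
  have "(\<Sum>i=1..Suc n. \<Sum>j<i. q j) = (\<Sum>j<n. (real n - real j) * q j) + (\<Sum>j<Suc n. q j)"
    using Suc by simp
  also have "\<dots> = (\<Sum>j<n. (real (Suc n) - real j) * q j) + q n"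
  proof -
    have "(\<Sum>j<n. (real (Suc n) - real j) * q j) = (\<Sum>j<n. (real n - real j) * q j + q j)"
      by (rule sum.cong) (auto simp: algebra_simps)
    then show ?thesis by (simp add: sum.distrib)
  qed
  also have "\<dots> = (\<Sum>j<Suc n. (real (Suc n) - real j) * q j)" by simp
  finally show ?case .
qed

lemma sum_take_nth:
  fixes xs :: "real list"
  assumes "i \<le> length xs"
  shows "sum_list (take i xs) = (\<Sum>j<i. xs ! j)"
  using assms by (simp add: sum_list_sum_nth atLeast0LessThan)

lemma perm_sum:
  fixes f :: "real \<Rightarrow> real"
  assumes "mset s = mset (map p [1..<K+1])"
  shows "(\<Sum>j<length s. f (s ! j)) = (\<Sum>k=1..K. f (p k))"
proof -
  have "(\<Sum>j<length s. f (s ! j)) = sum_list (map f s)"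
    by (simp add: sum_list_sum_nth atLeast0LessThan)
  also have "\<dots> = sum_mset (image_mset f (mset s))"
    by (metis mset_map sum_mset_sum_list)
  also have "\<dots> = sum_list (map f (map p [1..<K+1]))"
    using assms by (metis mset_map sum_mset_sum_list)
  also have "\<dots> = sum (f \<circ> p) (set [1..<K+1])"
    by (simp only: map_map sum_set_upt_conv_sum_list_nat)
  also have "\<dots> = (\<Sum>k=1..K. f (p k))"
    by (simp only: set_upt Suc_eq_plus1[symmetric] atLeastLessThanSuc_atLeastAtMost o_def)
  finally show ?thesis .
qed

lemma gibbs_term:
  fixes q a Z :: real
  assumes "q \<ge> 0" "Z > 0"
  shows "- (if q = 0 then 0 else q * ln q) - q * a - q * ln Z \<le> exp (- a) / Z - q"
proof (cases "q = 0")
  case True then show ?thesis using assms by simp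
next
  case False
  then have qp: "q > 0" using assms by simp
  have x: "exp (- a) / (Z * q) > 0" using qp assms by simp
  have "ln (exp (- a) / (Z * q)) = - a - ln Z - ln q"
    using qp assms by (simp add: ln_div ln_mult)
  moreover have "ln (exp (- a) / (Z * q)) \<le> exp (- a) / (Z * q) - 1"
    using ln_le_minus_one x by blast
  ultimately have "- a - ln Z - ln q \<le> exp (- a) / (Z * q) - 1" by simp
  then have "q * (- a - ln Z - ln q) \<le> q * (exp (- a) / (Z * q) - 1)"
    using qp by (simp add: mult_left_mono)
  also have "\<dots> = exp (- a) / Z - q" using qp by (simp add: field_simps)
  finally show ?thesis using False by (simp add: algebra_simps)
qed

theorem proposition1:
  fixes K :: nat and p :: "nat \<Rightarrow> real"
  assumes "K \<ge> 1"
    and "\<And>k. k \<in> {1..K} \<Longrightarrow> p k \<ge> 0"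
    and "(\<Sum>k=1..K. p k) = 1"
  shows "avg_score K p \<le> min (C_const K + 1 - entropy K p) (1 + entropy K p)"
proof -
  define s where "s = sorted_desc K p"
  have ms: "mset s = mset (map p [1..<K+1])"
    unfolding s_def sorted_desc_def by (simp only: mset_rev mset_sort)
  have len: "length s = K"
    using arg_cong[OF ms, of size] by simp
  have setS: "set s = p ` {1..K}"
    using arg_cong[OF ms, of set_mset] by (auto simp: atLeastLessThanSuc_atLeastAtMost)
  define q where "q j = s ! j" for j
  define g :: "real \<Rightarrow> real" where "g x = (if x = 0 then 0 else x * ln x)" for x
  have qnn: "q j \<ge> 0" if "j < K" for j
  proof -
    have "q j \<in> set s" using that len by (simp add: q_def)
    then show ?thesis using setS assms(2) by auto
  qed
  have qsum: "(\<Sum>j<K. q j) = 1"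
    using perm_sum[OF ms, of "\<lambda>x. x"] assms(3) len by (simp add: q_def)
  have q1: "q j \<le> 1" if "j < K" for j
  proof -
    have "q j \<le> (\<Sum>j<K. q j)"
      by (rule member_le_sum) (use that qnn in auto)
    then show ?thesis using qsum by simp
  qed
  have ent: "entropy K p = - (\<Sum>j<K. g (q j))"
    using perm_sum[OF ms, of g] len unfolding entropy_def by (simp add: q_def g_def)
  have Kp: "real K > 0" using assms(1) by simp
  have avg: "avg_score K p = (1 / real K) * (\<Sum>j<K. (real K - real j) * q j)"
  proof -
    have "(\<Sum>i=1..K. aps_score K p i) = (\<Sum>i=1..K. \<Sum>j<i. q j)"
      by (rule sum.cong) (auto simp: aps_score_def s_def[symmetric] sum_take_nth len q_def)
    then show ?thesis unfolding avg_score_def using double_sum[of q K] by simp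
  qed
  have avg2: "avg_score K p = 1 - (\<Sum>j<K. q j * (real j / real K))"
  proof -
    have "(1 / real K) * (\<Sum>j<K. (real K - real j) * q j) = (\<Sum>j<K. q j - q j * (real j / real K))"
      using Kp by (simp add: sum_distrib_left field_simps)
    also have "\<dots> = 1 - (\<Sum>j<K. q j * (real j / real K))"
      by (simp add: sum_subtractf qsum)
    finally show ?thesis using avg by simp
  qed
  have b1: "avg_score K p \<le> 1 + entropy K p"
  proof -
    have "(\<Sum>j<K. q j * (real j / real K)) \<ge> 0"
      by (rule sum_nonneg) (use qnn Kp in auto)
    moreover have "(\<Sum>j<K. g (q j)) \<le> 0"
    proof (rule sum_nonpos)
      fix j assume "j \<in> {..<K}"
      then have "0 \<le> q j" "q j \<le> 1" using qnn q1 by auto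
      then show "g (q j) \<le> 0"
        by (auto simp: g_def mult_nonneg_nonpos)
    qed
    ultimately show ?thesis using avg2 ent by simp
  qed
  define Z where "Z = (\<Sum>j<K. exp (- (real j / real K)))"
  have Zp: "Z > 0" unfolding Z_def using assms(1)
    by (intro sum_pos) (auto simp: lessThan_empty_iff)
  have CZ: "C_const K = ln Z"
  proof -
    have "(\<Sum>k=1..K. exp (- (real k - 1) / real K)) = (\<Sum>j<K. exp (- (real j / real K)))"
    proof -
      have "(\<Sum>k=1..K. exp (- (real k - 1) / real K)) = (\<Sum>j<K. exp (- (real (Suc j) - 1) / real K))"
        using sum.atLeast1_atMost_eq[of "\<lambda>k. exp (- (real k - 1) / real K)" K] by simp
      then show ?thesis by (simp add: atLeast0LessThan)
    qed
    then show ?thesis unfolding C_const_def Z_def by simp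
  qed
  have b2: "avg_score K p \<le> C_const K + 1 - entropy K p"
  proof -
    have "(\<Sum>j<K. - g (q j) - q j * (real j / real K) - q j * ln Z)
          \<le> (\<Sum>j<K. exp (- (real j / real K)) / Z - q j)"
    proof (rule sum_mono)
      fix j assume "j \<in> {..<K}"
      then show "- g (q j) - q j * (real j / real K) - q j * ln Z \<le> exp (- (real j / real K)) / Z - q j"
        using gibbs_term[OF qnn Zp, of j "real j / real K"] unfolding g_def by simp
    qed
    also have "\<dots> = 0"
      using Zp by (simp add: sum_subtractf qsum sum_divide_distrib[symmetric] Z_def[symmetric])
    finally have "(\<Sum>j<K. - g (q j)) - (\<Sum>j<K. q j * (real j / real K)) - ln Z * (\<Sum>j<K. q j) \<le> 0"
      by (simp add: sum_subtractf sum_distrib_left mult.commute)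
    then show ?thesis using avg2 ent CZ qsum by (simp add: sum_negf)
  qed
  show ?thesis using b1 b2 by simp
qed

end
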